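(* Let $c \geq 1$, $r\ge 0$, $k \geq 1$ be integers and let $m$ be the number of variables of $F_{r,k}$. Then every $c$-NSOBDD computing $F_{r,k}$ has size at least $\left(\frac{m}{6k^2}\right)^{k/(4c-2)}$.
   Context: For a graph $G$, the CNF $CNF(G)$ has a variable $X_u$ for each vertex $u$ and a variable $X_{u,v}=X_{v,u}$ for each edge $\{u,v\}$; its clauses are $(X_u \vee X_{u,v} \vee X_v)$ for each edge $\{u,v\}$. $T_r$ is the complete binary tree of height $r$; $CT_{r,k}$ is obtained from $T_r$ by replacing each node by a $k$-clique and, for each edge $\{a,b\}$ of $T_r$, joining every vertex of the clique of $a$ to every vertex of the clique of $b$; $F_{r,k}=CNF(CT_{r,k})$. A non-deterministic branching program is a directed acyclic graph with one root and one leaf, some of whose edges are labelled by literals of variables. A path is consistent if it does not contain two edges labelled by opposite literals of the same variable; a consistent root-leaf path is a computational path. The program computes $F$: an assignment $S$ (as a set of literals) satisfies $F$ iff some computational path has all its labels in $S$. A $c$-NSOBDD is such a program for which there is a permutation $SV$ of its variables such that every computational path $P$ can be written as $P=P_1+\dots+P_c$ (concatenation of subpaths) where on each $P_i$ each variable occurs at most once and the labels along $P_i$ are ordered according to $SV$. Size is the number of nodes. *)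

theory Defs
  imports Complex_Main
begin

type_synonym 'x literal = "'x \<times> bool"
type_synonym 'x clause = "'x literal set"

(* variables of CNF(G): X_u = Inl u for a vertex u, X_{u,v} = Inr {u,v} for an edge *)
type_synonym 'v cnf_var = "'v + 'v set"

(* a graph is a pair (vertex set, set of edges), each edge a 2-element set *)
type_synonym 'v graph = "'v set \<times> 'v set set"

definition graph_cnf :: "'v graph \<Rightarrow> 'v cnf_var clause set" where
  "graph_cnf G = {{(Inl u, True), (Inr {u, v}, True), (Inl v, True)} | u v. {u, v} \<in> snd G}"

definition graph_cnf_vars :: "'v graph \<Rightarrow> 'v cnf_var set" where
  "graph_cnf_vars G = Inl ` fst G \<union> Inr ` snd G"

definition cnf_sat :: "'x clause set \<Rightarrow> ('x \<Rightarrow> bool) \<Rightarrow> bool" where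
  "cnf_sat F \<sigma> \<longleftrightarrow> (\<forall>C\<in>F. \<exists>l\<in>C. \<sigma> (fst l) = snd l)"

(* nodes of T_r: binary strings of length at most r (root = []) *)
definition tree_nodes :: "nat \<Rightarrow> bool list set" where
  "tree_nodes r = {w. length w \<le> r}"

definition tree_edges :: "nat \<Rightarrow> bool list set set" where
  "tree_edges r = {{w, w @ [b]} | w b. length w < r}"

definition CT :: "nat \<Rightarrow> nat \<Rightarrow> (bool list \<times> nat) graph" where
  "CT r k = (tree_nodes r \<times> {..<k},
     {{(a, i), (a, j)} | a i j. a \<in> tree_nodes r \<and> i < k \<and> j < k \<and> i \<noteq> j}
     \<union> {{(a, i), (b, j)} | a b i j. {a, b} \<in> tree_edges r \<and> i < k \<and> j < k})"

definition F :: "nat \<Rightarrow> nat \<Rightarrow> (bool list \<times> nat) cnf_var clause set" where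
  "F r k = graph_cnf (CT r k)"

(* edges are (source, optional literal label, target) *)
record ('n, 'x) bp =
  bp_nodes :: "'n set"
  bp_edges :: "('n \<times> 'x literal option \<times> 'n) set"
  bp_root :: 'n
  bp_leaf :: 'n

definition bp_wf :: "('n, 'x) bp \<Rightarrow> bool" where
  "bp_wf B \<longleftrightarrow>
     finite (bp_nodes B) \<and> finite (bp_edges B) \<and>
     (\<forall>(u, l, v) \<in> bp_edges B. u \<in> bp_nodes B \<and> v \<in> bp_nodes B) \<and>
     acyclic {(u, v). \<exists>l. (u, l, v) \<in> bp_edges B} \<and>
     bp_root B \<in> bp_nodes B \<and> bp_leaf B \<in> bp_nodes B \<and>
     (\<forall>v \<in> bp_nodes B. (\<not> (\<exists>u l. (u, l, v) \<in> bp_edges B)) \<longleftrightarrow> v = bp_root B) \<and>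
     (\<forall>u \<in> bp_nodes B. (\<not> (\<exists>l v. (u, l, v) \<in> bp_edges B)) \<longleftrightarrow> u = bp_leaf B)"

primrec is_path :: "('n, 'x) bp \<Rightarrow> 'n \<Rightarrow> ('n \<times> 'x literal option \<times> 'n) list \<Rightarrow> 'n \<Rightarrow> bool" where
  "is_path B u [] v \<longleftrightarrow> u = v"
| "is_path B u (e # P) v \<longleftrightarrow> e \<in> bp_edges B \<and> fst e = u \<and> is_path B (snd (snd e)) P v"

definition path_labels :: "('n \<times> 'x literal option \<times> 'n) list \<Rightarrow> 'x literal list" where
  "path_labels P = List.map_filter (\<lambda>e. fst (snd e)) P"

definition consistent :: "('n \<times> 'x literal option \<times> 'n) list \<Rightarrow> bool" where
  "consistent P \<longleftrightarrow> \<not> (\<exists>x. (x, True) \<in> set (path_labels P) \<and> (x, False) \<in> set (path_labels P))"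

definition comp_path :: "('n, 'x) bp \<Rightarrow> ('n \<times> 'x literal option \<times> 'n) list \<Rightarrow> bool" where
  "comp_path B P \<longleftrightarrow> is_path B (bp_root B) P (bp_leaf B) \<and> consistent P"

definition computes :: "('n, 'x) bp \<Rightarrow> 'x clause set \<Rightarrow> bool" where
  "computes B Fm \<longleftrightarrow> (\<forall>\<sigma>. cnf_sat Fm \<sigma> \<longleftrightarrow>
      (\<exists>P. comp_path B P \<and> (\<forall>l \<in> set (path_labels P). \<sigma> (fst l) = snd l)))"

definition bp_vars :: "('n, 'x) bp \<Rightarrow> 'x set" where
  "bp_vars B = {fst l | l. \<exists>u v. (u, Some l, v) \<in> bp_edges B}"

definition sv_less :: "'x list \<Rightarrow> 'x \<Rightarrow> 'x \<Rightarrow> bool" where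
  "sv_less SV a b \<longleftrightarrow> (\<exists>i j. i < j \<and> j < length SV \<and> SV ! i = a \<and> SV ! j = b)"

definition c_NSOBDD :: "nat \<Rightarrow> ('n, 'x) bp \<Rightarrow> bool" where
  "c_NSOBDD c B \<longleftrightarrow> bp_wf B \<and>
     (\<exists>SV. distinct SV \<and> set SV = bp_vars B \<and>
        (\<forall>P. comp_path B P \<longrightarrow>
           (\<exists>Ps. length Ps = c \<and> concat Ps = P \<and>
              (\<forall>Q \<in> set Ps. sorted_wrt (sv_less SV) (map fst (path_labels Q))))))"

definition bp_size :: "('n, 'x) bp \<Rightarrow> nat" where
  "bp_size B = card (bp_nodes B)"

end

theory Submission
  imports Defs
begin

definition walk_end :: "'n \<Rightarrow> ('n \<times> 'l \<times> 'n) list \<Rightarrow> 'n" where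
  "walk_end u P = (if P = [] then u else snd (snd (last P)))"

lemma walk_end_Nil[simp]: "walk_end u [] = u" by (simp add: walk_end_def)
lemma walk_end_Cons[simp]: "walk_end u (e # P) = walk_end (snd (snd e)) P"
  by (simp add: walk_end_def)
lemma walk_end_append: "walk_end u (P @ Q) = walk_end (walk_end u P) Q"
  by (induction P arbitrary: u) auto

lemma is_path_append:
  "is_path B u (P @ Q) w \<longleftrightarrow> is_path B u P (walk_end u P) \<and> is_path B (walk_end u P) Q w"
  by (induction P arbitrary: u) auto

lemma is_path_end: "is_path B u P v \<Longrightarrow> walk_end u P = v"
  by (induction P arbitrary: u) auto

lemma is_path_mix:
  assumes "length segs = n" "\<forall>j<n. is_path B (bd j) (segs ! j) (bd (Suc j))"
  shows "is_path B (bd 0) (concat segs) (bd n)"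
  using assms
proof (induction segs arbitrary: bd n)
  case Nil then show ?case by simp
next
  case (Cons s ss)
  then obtain n' where n: "n = Suc n'" by (cases n) auto
  have h0: "is_path B (bd 0) s (bd 1)" using Cons.prems n by force
  have "is_path B ((bd \<circ> Suc) 0) (concat ss) ((bd \<circ> Suc) n')"
    using Cons.prems n by (intro Cons.IH) auto
  then show ?case using h0 is_path_end[OF h0] n by (simp add: is_path_append)
qed

lemma is_path_concat_split:
  assumes "is_path B u (concat segs) w" "j < length segs"
  shows "is_path B (walk_end u (concat (take j segs))) (segs ! j) (walk_end u (concat (take (Suc j) segs)))"
  using assms
proof (induction segs arbitrary: u j)
  case Nil then show ?case by simp
next
  case (Cons s ss)
  show ?case
  proof (cases j)
    case 0 then show ?thesis using Cons.prems by (simp add: is_path_append)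
  next
    case (Suc j')
    have "is_path B (walk_end u s) (concat ss) w" using Cons.prems by (simp add: is_path_append)
    from Cons.IH[OF this] Suc Cons.prems show ?thesis by (simp add: walk_end_append)
  qed
qed

lemma path_labels_append: "path_labels (P @ Q) = path_labels P @ path_labels Q"
  by (simp add: path_labels_def map_filter_def)

lemma path_labels_Cons: "path_labels (e # P) = (case fst (snd e) of None \<Rightarrow> path_labels P | Some l \<Rightarrow> l # path_labels P)"
  by (simp add: path_labels_def map_filter_def split: option.split)
lemma path_labels_Nil[simp]: "path_labels [] = []" by (simp add: path_labels_def map_filter_def)

lemma set_path_labels: "set (path_labels P) = {l. \<exists>e\<in>set P. fst (snd e) = Some l}"
  by (induction P) (auto simp: path_labels_Cons path_labels_Nil split: option.splits)

lemma path_labels_concat: "set (path_labels (concat segs)) = (\<Union>s\<in>set segs. set (path_labels s))"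
  by (auto simp: set_path_labels)

definition inL :: "'x set \<Rightarrow> ('n \<times> 'x literal option \<times> 'n) \<Rightarrow> bool" where
  "inL Ls e = (case fst (snd e) of None \<Rightarrow> True | Some l \<Rightarrow> fst l \<in> Ls)"

lemma takeWhile_labels:
  assumes "l \<in> set (path_labels (takeWhile (inL Ls) Q))"
  shows "fst l \<in> Ls"
proof -
  from assms obtain e where e: "e \<in> set (takeWhile (inL Ls) Q)" "fst (snd e) = Some l"
    by (auto simp: set_path_labels)
  then have "inL Ls e" by (meson set_takeWhileD)
  with e show ?thesis by (simp add: inL_def)
qed

lemma sv_less_notin:
  assumes "distinct SV" "sv_less SV a b" "a \<notin> set (take t SV)"
  shows "b \<notin> set (take t SV)"
proof
  assume b: "b \<in> set (take t SV)"
  from assms(2) obtain i j where ij: "i < j" "j < length SV" "SV ! i = a" "SV ! j = b"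
    by (auto simp: sv_less_def)
  from b obtain j' where j': "j' < length (take t SV)" "take t SV ! j' = b"
    by (auto simp: in_set_conv_nth)
  then have "SV ! j' = b" "j' < t" "j' < length SV" by auto
  with ij assms(1) have "j = j'" using nth_eq_iff_index_eq by metis
  then have "i < t" using ij \<open>j' < t\<close> by simp
  then have "a \<in> set (take t SV)" using ij by (auto simp: in_set_conv_nth intro!: exI[of _ i])
  with assms(3) show False by simp
qed

lemma dropWhile_labels:
  assumes "distinct SV" "sorted_wrt (sv_less SV) (map fst (path_labels Q))"
    and "l \<in> set (path_labels (dropWhile (inL (set (take t SV))) Q))"
  shows "fst l \<notin> set (take t SV)"
proof -
  let ?Ls = "set (take t SV)"
  obtain e0 rest where d: "dropWhile (inL ?Ls) Q = e0 # rest"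
    using assms(3) by (cases "dropWhile (inL ?Ls) Q") auto
  have ne: "\<not> inL ?Ls e0" using d by (metis dropWhile_eq_Cons_conv)
  then obtain l0 where l0: "fst (snd e0) = Some l0" "fst l0 \<notin> ?Ls"
    by (auto simp: inL_def split: option.splits)
  have Q: "Q = takeWhile (inL ?Ls) Q @ e0 # rest" using d by (metis takeWhile_dropWhile_id)
  have "path_labels Q = path_labels (takeWhile (inL ?Ls) Q) @ l0 # path_labels rest"
    by (subst Q) (simp add: path_labels_append path_labels_Cons l0)
  with assms(2) have "sorted_wrt (sv_less SV) (map fst (l0 # path_labels rest))"
    by (simp add: sorted_wrt_append)
  then have srt: "\<forall>l'\<in>set (path_labels rest). sv_less SV (fst l0) (fst l')" by simp
  from assms(3) d l0 have "l = l0 \<or> l \<in> set (path_labels rest)"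
    by (simp add: path_labels_Cons)
  then show ?thesis
  proof
    assume "l = l0" with l0 show ?thesis by simp
  next
    assume "l \<in> set (path_labels rest)"
    with srt have "sv_less SV (fst l0) (fst l)" by blast
    from sv_less_notin[OF assms(1) this l0(2)] show ?thesis .
  qed
qed

lemma nth_concat_pairs:
  "j < 2 * length xs \<Longrightarrow> concat (map (\<lambda>x. [f x, g x]) xs) ! j = (if even j then f else g) (xs ! (j div 2))"
proof (induction xs arbitrary: j)
  case Nil then show ?case by simp
next
  case (Cons x xs)
  show ?case
  proof (cases j)
    case 0 then show ?thesis by simp
  next
    case (Suc j1)
    show ?thesis
    proof (cases j1)
      case 0 then show ?thesis using Suc by simp
    next
      case (Suc j2)
      then have "j = Suc (Suc j2)" using \<open>j = Suc j1\<close> by simp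
      moreover have "j2 < 2 * length xs" using Cons.prems \<open>j = Suc (Suc j2)\<close> by simp
      ultimately show ?thesis using Cons.IH[of j2] by (simp add: nth_Cons')
    qed
  qed
qed

lemma length_concat_pairs: "length (concat (map (\<lambda>x. [f x, g x]) xs)) = 2 * length xs"
  by (induction xs) auto

lemma concat_concat_pairs:
  "concat (concat (map (\<lambda>x. [takeWhile P x, dropWhile P x]) xs)) = concat xs"
  by (induction xs) auto

lemma agree_consistent: "\<forall>l\<in>set (path_labels P). \<sigma> (fst l) = snd l \<Longrightarrow> consistent P"
  unfolding consistent_def by (metis (full_types) fst_conv snd_conv)

lemma is_path_nodes: "bp_wf B \<Longrightarrow> is_path B u P v \<Longrightarrow> u \<in> bp_nodes B \<Longrightarrow> v \<in> bp_nodes B"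
proof (induction P arbitrary: u)
  case Nil then show ?case by simp
next
  case (Cons e P)
  then have "e \<in> bp_edges B" "is_path B (snd (snd e)) P v" by auto
  moreover obtain a l b where "e = (a, l, b)" by (cases e) auto
  ultimately have "snd (snd e) \<in> bp_nodes B" using Cons.prems(1) unfolding bp_wf_def by fastforce
  then show ?case using Cons by auto
qed

lemma fooling:
  fixes B :: "('n,'x) bp" and Fm :: "'x clause set" and \<sigma> :: "'i \<Rightarrow> 'x \<Rightarrow> bool"
  assumes wf: "bp_wf B" and dist: "distinct SV"
    and split: "\<forall>P. comp_path B P \<longrightarrow> (\<exists>Ps. length Ps = c \<and> concat Ps = P \<and>
        (\<forall>Q\<in>set Ps. sorted_wrt (sv_less SV) (map fst (path_labels Q))))"
    and comp: "computes B Fm" and c1: "c \<ge> 1"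
    and sat: "\<forall>s\<in>I. cnf_sat Fm (\<sigma> s)"
    and fool: "\<forall>s\<in>I. \<forall>s'\<in>I. s \<noteq> s' \<longrightarrow>
       \<not> cnf_sat Fm (\<lambda>x. if x \<in> set (take t SV) then \<sigma> s x else \<sigma> s' x) \<or>
       \<not> cnf_sat Fm (\<lambda>x. if x \<in> set (take t SV) then \<sigma> s' x else \<sigma> s x)"
  shows "card I \<le> card (bp_nodes B) ^ (2 * c - 1)"
proof -
  let ?Ls = "set (take t SV)"
  let ?root = "bp_root B" and ?leaf = "bp_leaf B"
  have "\<forall>s\<in>I. \<exists>Ps. length Ps = c \<and> comp_path B (concat Ps) \<and>
      (\<forall>l\<in>set (path_labels (concat Ps)). \<sigma> s (fst l) = snd l) \<and>
      (\<forall>Q\<in>set Ps. sorted_wrt (sv_less SV) (map fst (path_labels Q)))"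
  proof
    fix s assume "s \<in> I"
    with sat comp obtain P where P: "comp_path B P" "\<forall>l\<in>set (path_labels P). \<sigma> s (fst l) = snd l"
      unfolding computes_def by blast
    with split obtain Ps where "length Ps = c" "concat Ps = P"
      "\<forall>Q\<in>set Ps. sorted_wrt (sv_less SV) (map fst (path_labels Q))" by blast
    with P show "\<exists>Ps. length Ps = c \<and> comp_path B (concat Ps) \<and>
      (\<forall>l\<in>set (path_labels (concat Ps)). \<sigma> s (fst l) = snd l) \<and>
      (\<forall>Q\<in>set Ps. sorted_wrt (sv_less SV) (map fst (path_labels Q)))" by blast
  qed
  then obtain PS where PS: "\<And>s. s \<in> I \<Longrightarrow> length (PS s) = c \<and> comp_path B (concat (PS s)) \<and>
      (\<forall>l\<in>set (path_labels (concat (PS s))). \<sigma> s (fst l) = snd l) \<and>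
      (\<forall>Q\<in>set (PS s). sorted_wrt (sv_less SV) (map fst (path_labels Q)))"
    by metis
  define segs where "segs s = concat (map (\<lambda>Q. [takeWhile (inL ?Ls) Q, dropWhile (inL ?Ls) Q]) (PS s))" for s
  define bd where "bd s j = walk_end ?root (concat (take j (segs s)))" for s j
  define tau where "tau s = map (bd s) [1..<2*c]" for s
  have len: "length (segs s) = 2 * c" if "s \<in> I" for s
    using PS[OF that] by (simp add: segs_def length_concat_pairs)
  have cc: "concat (segs s) = concat (PS s)" for s
    by (simp add: segs_def concat_concat_pairs)
  have path: "is_path B ?root (concat (segs s)) ?leaf" if "s \<in> I" for s
    using PS[OF that] cc by (simp add: comp_path_def)
  have seg: "is_path B (bd s j) (segs s ! j) (bd s (Suc j))" if "s \<in> I" "j < 2 * c" for s j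
    unfolding bd_def using is_path_concat_split[OF path[OF that(1)]] len[OF that(1)] that(2) by simp
  have bd0: "bd s 0 = ?root" for s by (simp add: bd_def)
  have bdc: "bd s (2 * c) = ?leaf" if "s \<in> I" for s
    unfolding bd_def using len[OF that] is_path_end[OF path[OF that]] by simp
  have segdef: "segs s ! j = (if even j then takeWhile (inL ?Ls) else dropWhile (inL ?Ls)) (PS s ! (j div 2))"
    if "s \<in> I" "j < 2 * c" for s j
    using nth_concat_pairs[of j "PS s" "takeWhile (inL ?Ls)" "dropWhile (inL ?Ls)"] PS[OF that(1)] that(2)
    by (simp add: segs_def)
  have lab_even: "fst l \<in> ?Ls" if "s \<in> I" "j < 2 * c" "even j" "l \<in> set (path_labels (segs s ! j))" for s j l
    using takeWhile_labels that segdef[OF that(1,2)] by simp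
  have lab_odd: "fst l \<notin> ?Ls" if "s \<in> I" "j < 2 * c" "odd j" "l \<in> set (path_labels (segs s ! j))" for s j l
  proof -
    have "j div 2 < length (PS s)" using PS[OF that(1)] that(2) by simp
    then have "PS s ! (j div 2) \<in> set (PS s)" by simp
    then have "sorted_wrt (sv_less SV) (map fst (path_labels (PS s ! (j div 2))))" using PS[OF that(1)] by blast
    from dropWhile_labels[OF dist this] that segdef[OF that(1,2)] show ?thesis by simp
  qed
  have lab_agree: "\<sigma> s (fst l) = snd l" if "s \<in> I" "j < 2 * c" "l \<in> set (path_labels (segs s ! j))" for s j l
  proof -
    have "segs s ! j \<in> set (segs s)" using len[OF that(1)] that(2) by simp
    then have "l \<in> set (path_labels (concat (segs s)))" using that(3) by (auto simp: path_labels_concat)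
    then show ?thesis using PS[OF that(1)] cc by metis
  qed
  have hyb: "cnf_sat Fm (\<lambda>x. if x \<in> ?Ls then \<sigma> s x else \<sigma> s' x)"
    if s: "s \<in> I" "s' \<in> I" "tau s = tau s'" for s s'
  proof -
    have bdeq: "bd s j = bd s' j" if "j \<le> 2 * c" for j
    proof -
      consider "j = 0" | "j = 2 * c" | "0 < j \<and> j < 2 * c" using \<open>j \<le> 2*c\<close> by linarith
      then show ?thesis
      proof cases
        case 1 then show ?thesis by (simp add: bd0)
      next
        case 2 then show ?thesis using bdc s by simp
      next
        case 3
        then have "tau s ! (j - 1) = bd s j" "tau s' ! (j - 1) = bd s' j"
          by (auto simp: tau_def)
        then show ?thesis using s(3) by simp
      qed
    qed
    define hy where "hy = map (\<lambda>j. if even j then segs s ! j else segs s' ! j) [0..<2*c]"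
    have "is_path B (bd s 0) (concat hy) (bd s (2*c))"
    proof (rule is_path_mix)
      show "length hy = 2 * c" by (simp add: hy_def)
      show "\<forall>j<2 * c. is_path B (bd s j) (hy ! j) (bd s (Suc j))"
      proof (intro allI impI)
        fix j assume j: "j < 2 * c"
        show "is_path B (bd s j) (hy ! j) (bd s (Suc j))"
        proof (cases "even j")
          case True then show ?thesis using seg[OF s(1) j] j by (simp add: hy_def)
        next
          case False then show ?thesis using seg[OF s(2) j] j bdeq[of j] bdeq[of "Suc j"]
            by (simp add: hy_def)
        qed
      qed
    qed
    then have p: "is_path B ?root (concat hy) ?leaf" using bd0 bdc[OF s(1)] by simp
    have ag: "\<forall>l\<in>set (path_labels (concat hy)). (\<lambda>x. if x \<in> ?Ls then \<sigma> s x else \<sigma> s' x) (fst l) = snd l"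
    proof
      fix l assume "l \<in> set (path_labels (concat hy))"
      then obtain sg where "sg \<in> set hy" "l \<in> set (path_labels sg)" by (auto simp: path_labels_concat)
      then obtain j where j: "j < 2 * c" "sg = (if even j then segs s ! j else segs s' ! j)"
        by (auto simp: hy_def)
      show "(\<lambda>x. if x \<in> ?Ls then \<sigma> s x else \<sigma> s' x) (fst l) = snd l"
      proof (cases "even j")
        case True
        with j \<open>l \<in> set (path_labels sg)\<close> have "l \<in> set (path_labels (segs s ! j))" by simp
        then show ?thesis using lab_even[OF s(1) j(1) True] lab_agree[OF s(1) j(1)] by simp
      next
        case False
        with j \<open>l \<in> set (path_labels sg)\<close> have "l \<in> set (path_labels (segs s' ! j))" by simp
        then show ?thesis using lab_odd[OF s(2) j(1) False] lab_agree[OF s(2) j(1)] by simp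
      qed
    qed
    then have "comp_path B (concat hy)" using p agree_consistent by (auto simp: comp_path_def)
    then show ?thesis using comp ag unfolding computes_def by blast
  qed
  have inj: "inj_on tau I"
  proof (rule inj_onI)
    fix s s' assume a: "s \<in> I" "s' \<in> I" "tau s = tau s'"
    show "s = s'" using hyb[OF a] hyb[OF a(2,1) a(3)[symmetric]] fool a(1,2) by blast
  qed
  have nodes_bd: "bd s j \<in> bp_nodes B" if "s \<in> I" for s j
  proof -
    have "concat (segs s) = concat (take j (segs s)) @ concat (drop j (segs s))"
      by (metis append_take_drop_id concat_append)
    then have "is_path B ?root (concat (take j (segs s))) (bd s j)"
      using path[OF that] by (metis bd_def is_path_append)
    then show ?thesis using is_path_nodes[OF wf] wf by (auto simp: bp_wf_def)
  qed
  have sub: "tau ` I \<subseteq> {xs. set xs \<subseteq> bp_nodes B \<and> length xs = 2 * c - 1}"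
    using nodes_bd by (auto simp: tau_def)
  have fin: "finite (bp_nodes B)" using wf by (simp add: bp_wf_def)
  have "card I \<le> card {xs. set xs \<subseteq> bp_nodes B \<and> length xs = 2 * c - 1}"
    by (rule card_inj_on_le[OF inj sub]) (simp add: finite_lists_length_eq fin)
  also have "\<dots> = card (bp_nodes B) ^ (2 * c - 1)" by (simp add: card_lists_length_eq fin)
  finally show ?thesis .
qed

lemma cut_lemma:
  fixes S :: "'a list set"
  assumes q: "q \<in> S"
    and par: "\<forall>a\<in>S. a \<noteq> q \<longrightarrow> (\<exists>a' x. a = a' @ [x] \<and> a' \<in> S)"
    and ex1: "a1 \<in> S" "P a1" and ex2: "a2 \<in> S" "\<not> P a2"
  shows "\<exists>a' x. a' \<in> S \<and> a' @ [x] \<in> S \<and> P a' \<noteq> P (a' @ [x])"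
proof -
  have "\<exists>b. b \<in> S \<and> P b \<noteq> P q" using ex1 ex2 by blast
  then obtain b0 where "b0 \<in> S \<and> P b0 \<noteq> P q" by blast
  from ex_has_least_nat[of "\<lambda>b. b \<in> S \<and> P b \<noteq> P q", OF this, of length]
  obtain b where b: "b \<in> S" "P b \<noteq> P q" and min: "\<forall>y. y \<in> S \<and> P y \<noteq> P q \<longrightarrow> length b \<le> length y"
    by blast
  have "b \<noteq> q" using b by blast
  with par b obtain a' x where ax: "b = a' @ [x]" "a' \<in> S" by blast
  have "P a' = P q" using min ax by (metis Suc_n_not_le_n length_append_singleton)
  then show ?thesis using ax b by metis
qed

lemma perm_exists:
  assumes "finite U" "A \<subseteq> U" "B \<subseteq> U" "card A = card B"
  shows "\<exists>\<pi>. bij_betw \<pi> U U \<and> \<pi> ` A = B"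
proof -
  have fA: "finite A" "finite B" using assms finite_subset by auto
  obtain f where f: "bij_betw f A B" using finite_same_card_bij[OF fA assms(4)] by blast
  have "card (U - A) = card (U - B)" using assms fA by (simp add: card_Diff_subset)
  then obtain g where g: "bij_betw g (U - A) (U - B)"
    using finite_same_card_bij assms(1) by (metis finite_Diff)
  define \<pi> where "\<pi> x = (if x \<in> A then f x else g x)" for x
  have "bij_betw \<pi> A B" using f by (rule bij_betw_cong[THEN iffD1, rotated]) (simp add: \<pi>_def)
  moreover have "bij_betw \<pi> (U - A) (U - B)" using g by (rule bij_betw_cong[THEN iffD1, rotated]) (simp add: \<pi>_def)
  ultimately have "bij_betw \<pi> (A \<union> (U - A)) (B \<union> (U - B))" by (rule bij_betw_combine) blast
  moreover have "A \<union> (U - A) = U" "B \<union> (U - B) = U" using assms by auto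
  ultimately show ?thesis using \<open>bij_betw \<pi> A B\<close> by (metis bij_betw_imp_surj_on)
qed

lemma mod_inj_small:
  fixes s u u' k :: nat
  assumes "u < k" "u' < k" "(s + u) mod k = (s + u') mod k"
  shows "u = u'"
proof (rule ccontr)
  assume ne: "u \<noteq> u'"
  {
    fix a b :: nat assume ab: "a < b" "b < k" "(s + a) mod k = (s + b) mod k"
    then have "k dvd (s + b) - (s + a)" using mod_eq_dvd_iff_nat[of "s+a" "s+b" k] by simp
    then have "k dvd b - a" by simp
    moreover have "0 < b - a" "b - a < k" using ab by auto
    ultimately have False using nat_dvd_not_less by blast
  }
  with assms ne show False by (metis linorder_neqE_nat)
qed

lemma prefix_sum_locate:
  fixes f :: "nat \<Rightarrow> nat"
  shows "x < (\<Sum>j<n. f j) \<Longrightarrow> \<exists>j<n. (\<Sum>j'<j. f j') \<le> x \<and> x < (\<Sum>j'<Suc j. f j')"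
proof (induction n)
  case 0 then show ?case by simp
next
  case (Suc n)
  show ?case
  proof (cases "x < (\<Sum>j<n. f j)")
    case True then show ?thesis using Suc.IH by (meson less_SucI)
  next
    case False then show ?thesis using Suc.prems by (intro exI[of _ n]) auto
  qed
qed

lemma prefix_sum_mono: "(j::nat) \<le> j' \<Longrightarrow> (\<Sum>i<j. f i) \<le> (\<Sum>i<j'. (f i :: nat))"
  by (rule sum_mono2) (auto simp: finite_lessThan)

lemma count_residues:
  fixes k n i :: nat
  assumes "\<Lambda> + k \<le> n * k" "k \<ge> 1"
  shows "card {x. x < \<Lambda> \<and> x mod k = i} \<le> n - 1"
proof -
  have "inj_on (\<lambda>x. x div k) {x. x < \<Lambda> \<and> x mod k = i}"
    by (rule inj_onI) (metis (mono_tags, lifting) div_mult_mod_eq mem_Collect_eq)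
  moreover have "(\<lambda>x. x div k) ` {x. x < \<Lambda> \<and> x mod k = i} \<subseteq> {..<n - 1}"
  proof
    fix y assume "y \<in> (\<lambda>x. x div k) ` {x. x < \<Lambda> \<and> x mod k = i}"
    then obtain x where x: "x < \<Lambda>" "y = x div k" by auto
    have "\<Lambda> \<le> (n - 1) * k" using assms by (simp add: diff_mult_distrib)
    then have "x < (n - 1) * k" using x by simp
    then show "y \<in> {..<n - 1}" using x less_mult_imp_div_less by auto
  qed
  ultimately show ?thesis by (metis card_inj_on_le card_lessThan finite_lessThan)
qed

definition matching :: "nat \<Rightarrow> nat \<Rightarrow> (bool list \<times> nat) set \<Rightarrow> ((bool list \<times> nat) \<times> (bool list \<times> nat)) set \<Rightarrow> bool" where
  "matching r k L M \<longleftrightarrow> finite M \<and> inj_on fst M \<and> inj_on snd M \<and>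
     (\<forall>e\<in>M. fst e \<in> L \<and> snd e \<notin> L \<and> {fst e, snd e} \<in> snd (CT r k))"

lemma tree_edge_CT:
  assumes "a @ [x] \<in> tree_nodes r" "i < k" "j < k"
  shows "{(a, i), (a @ [x], j)} \<in> snd (CT r k)" "{(a @ [x], j), (a, i)} \<in> snd (CT r k)"
proof -
  have "length a < r" using assms(1) by (simp add: tree_nodes_def)
  then have te: "{a, a @ [x]} \<in> tree_edges r" by (auto simp: tree_edges_def)
  then show "{(a, i), (a @ [x], j)} \<in> snd (CT r k)" using assms unfolding CT_def snd_conv
    by (intro UnI2 CollectI exI[of _ a] exI[of _ "a@[x]"] exI[of _ i] exI[of _ j]) simp
  then show "{(a @ [x], j), (a, i)} \<in> snd (CT r k)" by (simp add: insert_commute)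
qed

lemma region:
  fixes L :: "(bool list \<times> nat) set" and S :: "bool list set"
  assumes k: "k \<ge> 1" and Str: "S \<subseteq> tree_nodes r" and fin: "finite S" and q: "q \<in> S"
    and par: "\<forall>a\<in>S. a \<noteq> q \<longrightarrow> (\<exists>a' x. a = a' @ [x] \<and> a' \<in> S)"
    and cL: "k \<le> card (L \<inter> (S \<times> {..<k}))" and cO: "k \<le> card ((S \<times> {..<k}) - L)"
  shows "\<exists>M. matching r k L M \<and> card M = k \<and> M \<subseteq> (S \<times> {..<k}) \<times> (S \<times> {..<k})"
proof -
  define n where "n = card S"
  obtain en where en: "bij_betw en {..<n} S"
    using ex_bij_betw_nat_finite[OF fin] by (auto simp: n_def atLeast0LessThan)
  define Lidx where "Lidx a = {i. i < k \<and> (a, i) \<in> L}" for a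
  define ell where "ell j = card (Lidx (en j))" for j
  define sj where "sj j = (\<Sum>j'<j. ell j')" for j
  define Lam where "Lam = sj n"
  have Lidx_sub: "Lidx a \<subseteq> {..<k}" for a by (auto simp: Lidx_def)
  have ell_le: "ell j \<le> k" for j
    unfolding ell_def using card_mono[OF _ Lidx_sub] by fastforce
  have LS: "L \<inter> (S \<times> {..<k}) = Sigma S Lidx" by (auto simp: Lidx_def)
  have finL: "finite (Lidx a)" for a using Lidx_sub finite_subset by blast
  have "card (L \<inter> (S \<times> {..<k})) = (\<Sum>a\<in>S. card (Lidx a))" using LS fin finL by simp
  also have "\<dots> = (\<Sum>j<n. ell j)"
    unfolding ell_def by (rule sum.reindex_bij_betw[OF en, symmetric])
  finally have Lam_eq: "card (L \<inter> (S \<times> {..<k})) = Lam" by (simp add: Lam_def sj_def)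
  have cardS: "card (S \<times> {..<k}) = n * k" by (simp add: n_def card_cartesian_product)
  have "(S \<times> {..<k}) - L = (S \<times> {..<k}) - (L \<inter> (S \<times> {..<k}))" by blast
  then have "card ((S \<times> {..<k}) - L) = n * k - Lam"
    using cardS Lam_eq fin by (simp add: card_Diff_subset n_def)
  moreover have "Lam \<le> n * k" using Lam_eq cardS card_mono[of "S \<times> {..<k}" "L \<inter> (S \<times> {..<k})"] fin by auto
  ultimately have LamK: "Lam + k \<le> n * k" using cO cL Lam_eq by linarith
  have kLam: "k \<le> Lam" using cL Lam_eq by simp
  have n1: "n \<ge> 1" using q fin unfolding n_def by (metis One_nat_def Suc_leI card_gt_0_iff empty_iff)
  define Rows where "Rows j = (\<lambda>u. (sj j + u) mod k) ` {..<ell j}" for j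
  have Rows_sub: "Rows j \<subseteq> {..<k}" for j using k by (auto simp: Rows_def)
  have Rows_card: "card (Rows j) = ell j" for j
  proof -
    have "inj_on (\<lambda>u. (sj j + u) mod k) {..<ell j}"
    proof (rule inj_onI)
      fix u u' assume "u \<in> {..<ell j}" "u' \<in> {..<ell j}" "(sj j + u) mod k = (sj j + u') mod k"
      then show "u = u'" using ell_le[of j] by (intro mod_inj_small[of u k u' "sj j"]) auto
    qed
    then show ?thesis by (simp add: Rows_def card_image)
  qed
  have "\<forall>j<n. \<exists>\<pi>. bij_betw \<pi> {..<k} {..<k} \<and> \<pi> ` Rows j = Lidx (en j)"
    using perm_exists[OF finite_lessThan Rows_sub Lidx_sub] Rows_card ell_def by simp
  then obtain PI where PI: "\<And>j. j < n \<Longrightarrow> bij_betw (PI j) {..<k} {..<k} \<and> PI j ` Rows j = Lidx (en j)"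
    by metis
  have memL: "(en j, PI j i) \<in> L \<longleftrightarrow> i \<in> Rows j" if "j < n" "i < k" for j i
  proof -
    have b: "bij_betw (PI j) {..<k} {..<k}" and im: "PI j ` Rows j = Lidx (en j)" using PI[OF that(1)] by auto
    have lt: "PI j i < k" using b that(2) bij_betwE by blast
    have "(en j, PI j i) \<in> L \<longleftrightarrow> PI j i \<in> Lidx (en j)" using lt by (simp add: Lidx_def)
    also have "\<dots> \<longleftrightarrow> i \<in> Rows j" unfolding im[symmetric]
      by (rule inj_on_image_mem_iff[OF bij_betw_imp_inj_on[OF b] _ Rows_sub]) (use that in simp)
    finally show ?thesis .
  qed
  have cover: "\<exists>j<n. i \<in> Rows j" if "i < k" for i
  proof -
    have "i < (\<Sum>j<n. ell j)" using that kLam by (simp add: Lam_def sj_def)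
    from prefix_sum_locate[OF this] obtain j where j: "j < n" "sj j \<le> i" "i < sj j + ell j"
      by (auto simp: sj_def)
    have "(sj j + (i - sj j)) mod k = i" using j that by simp
    moreover have "i - sj j < ell j" using j by simp
    ultimately have "i \<in> Rows j" unfolding Rows_def by (metis image_eqI lessThan_iff)
    with j show ?thesis by blast
  qed
  have noncover: "\<exists>j<n. i \<notin> Rows j" if "i < k" for i
  proof (rule ccontr)
    assume "\<not> (\<exists>j<n. i \<notin> Rows j)"
    then have "\<forall>j<n. \<exists>u<ell j. (sj j + u) mod k = i" by (auto simp: Rows_def)
    then obtain U where U: "\<And>j. j < n \<Longrightarrow> U j < ell j \<and> (sj j + U j) mod k = i" by metis
    define X where "X j = sj j + U j" for j
    have Xlt: "X j < sj (Suc j)" if "j < n" for j using U[OF that] by (simp add: X_def sj_def)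
    have Xge: "sj j \<le> X j" for j by (simp add: X_def)
    have "inj_on X {..<n}"
    proof (rule inj_onI)
      fix j j' assume a: "j \<in> {..<n}" "j' \<in> {..<n}" "X j = X j'"
      show "j = j'"
      proof (rule ccontr)
        assume "j \<noteq> j'"
        then consider "j < j'" | "j' < j" by linarith
        then show False
        proof cases
          case 1
          then have "sj (Suc j) \<le> sj j'" unfolding sj_def by (intro prefix_sum_mono) simp
          then show False using Xlt[of j] Xge[of j'] a by auto
        next
          case 2
          then have "sj (Suc j') \<le> sj j" unfolding sj_def by (intro prefix_sum_mono) simp
          then show False using Xlt[of j'] Xge[of j] a by auto
        qed
      qed
    qed
    moreover have "X ` {..<n} \<subseteq> {x. x < Lam \<and> x mod k = i}"
    proof
      fix y assume "y \<in> X ` {..<n}"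
      then obtain j where j: "j < n" "y = X j" by auto
      have "sj (Suc j) \<le> sj n" unfolding sj_def using j by (intro prefix_sum_mono) simp
      then show "y \<in> {x. x < Lam \<and> x mod k = i}" using Xlt[OF j(1)] U[OF j(1)] j
        by (auto simp: Lam_def X_def)
    qed
    ultimately have "n \<le> card {x. x < Lam \<and> x mod k = i}"
    proof -
      assume inj: "inj_on X {..<n}" and sub: "X ` {..<n} \<subseteq> {x. x < Lam \<and> x mod k = i}"
      have fin: "finite {x. x < Lam \<and> x mod k = i}" by (rule finite_subset[of _ "{..<Lam}"]) auto
      have "card (X ` {..<n}) = n" using inj by (simp add: card_image)
      with card_mono[OF fin sub] show ?thesis by simp
    qed
    also have "\<dots> \<le> n - 1" using count_residues[OF LamK k] .
    finally show False using n1 by simp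
  qed
  define idx where "idx = the_inv_into {..<n} en"
  have idx: "idx a < n \<and> en (idx a) = a" if "a \<in> S" for a
  proof -
    have inj: "inj_on en {..<n}" and im: "en ` {..<n} = S" using en by (auto simp: bij_betw_def)
    show ?thesis unfolding idx_def
      using the_inv_into_into[OF inj, of a "{..<n}"] f_the_inv_into_f[OF inj, of a] that im by auto
  qed
  have idx_en: "idx (en j) = j" if "j < n" for j
    using en that unfolding idx_def by (simp add: bij_betw_def the_inv_into_f_f)
  define pn where "pn a = PI (idx a)" for a
  have pn_bij: "bij_betw (pn a) {..<k} {..<k}" if "a \<in> S" for a
    using PI idx[OF that] by (simp add: pn_def)
  have pn_lt: "pn a i < k" if "a \<in> S" "i < k" for a i
    using pn_bij[OF that(1)] that(2) bij_betwE by blast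
  have row: "\<exists>a' x. a' \<in> S \<and> a' @ [x] \<in> S \<and> ((a', pn a' i) \<in> L) \<noteq> ((a' @ [x], pn (a' @ [x]) i) \<in> L)"
    if ik: "i < k" for i
  proof -
    obtain j1 where j1: "j1 < n" "i \<in> Rows j1" using cover[OF ik] by blast
    obtain j2 where j2: "j2 < n" "i \<notin> Rows j2" using noncover[OF ik] by blast
    have "(en j1, pn (en j1) i) \<in> L" using memL[OF j1(1) ik] j1 idx_en by (simp add: pn_def)
    moreover have "(en j2, pn (en j2) i) \<notin> L" using memL[OF j2(1) ik] j2 idx_en by (simp add: pn_def)
    moreover have "en j1 \<in> S" "en j2 \<in> S" using en j1 j2 bij_betwE by blast+
    ultimately show ?thesis
      using cut_lemma[OF q par, of "en j1" "\<lambda>a. (a, pn a i) \<in> L" "en j2"] by simp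
  qed
  then obtain A X where AX: "\<And>i. i < k \<Longrightarrow> A i \<in> S \<and> A i @ [X i] \<in> S \<and>
      ((A i, pn (A i) i) \<in> L) \<noteq> ((A i @ [X i], pn (A i @ [X i]) i) \<in> L)"
    by metis
  define v1 where "v1 i = (A i, pn (A i) i)" for i
  define v2 where "v2 i = (A i @ [X i], pn (A i @ [X i]) i)" for i
  define e where "e i = (if v1 i \<in> L then (v1 i, v2 i) else (v2 i, v1 i))" for i
  have eL: "fst (e i) \<in> L" "snd (e i) \<notin> L" if "i < k" for i
    using AX[OF that] by (auto simp: e_def v1_def v2_def)
  have eform: "\<exists>a\<in>S. fst (e i) = (a, pn a i)" "\<exists>a\<in>S. snd (e i) = (a, pn a i)" if "i < k" for i
    using AX[OF that] by (auto simp: e_def v1_def v2_def)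
  have pinj: "i = i'" if "i < k" "i' < k" "a \<in> S" "a' \<in> S" "(a, pn a i) = (a', pn a' i')" for a a' i i'
  proof -
    have "a = a'" "pn a i = pn a i'" using that(5) by auto
    then show ?thesis using inj_onD[OF bij_betw_imp_inj_on[OF pn_bij[OF that(3)]], of i i'] that(1,2) by auto
  qed
  have fst_inj: "i = i'" if ii: "i < k" "i' < k" "fst (e i) = fst (e i')" for i i'
  proof -
    obtain a where a: "a \<in> S" "fst (e i) = (a, pn a i)" using eform(1)[OF ii(1)] by blast
    obtain a' where a': "a' \<in> S" "fst (e i') = (a', pn a' i')" using eform(1)[OF ii(2)] by blast
    have "(a, pn a i) = (a', pn a' i')" using a(2) a'(2) ii(3) by metis
    from pinj[OF ii(1,2) a(1) a'(1) this] show ?thesis .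
  qed
  have snd_inj: "i = i'" if ii: "i < k" "i' < k" "snd (e i) = snd (e i')" for i i'
  proof -
    obtain a where a: "a \<in> S" "snd (e i) = (a, pn a i)" using eform(2)[OF ii(1)] by blast
    obtain a' where a': "a' \<in> S" "snd (e i') = (a', pn a' i')" using eform(2)[OF ii(2)] by blast
    have "(a, pn a i) = (a', pn a' i')" using a(2) a'(2) ii(3) by metis
    from pinj[OF ii(1,2) a(1) a'(1) this] show ?thesis .
  qed
  have einj: "inj_on e {..<k}" by (rule inj_onI) (use fst_inj in auto)
  define M where "M = e ` {..<k}"
  have "matching r k L M"
    unfolding matching_def
  proof (intro conjI ballI)
    show "finite M" by (simp add: M_def)
    show "inj_on fst M"
    proof (rule inj_onI)
      fix w w' assume "w \<in> M" "w' \<in> M" "fst w = fst w'"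
      then obtain i i' where "i < k" "i' < k" "w = e i" "w' = e i'" "fst (e i) = fst (e i')" by (auto simp: M_def)
      then show "w = w'" using fst_inj by blast
    qed
    show "inj_on snd M"
    proof (rule inj_onI)
      fix w w' assume "w \<in> M" "w' \<in> M" "snd w = snd w'"
      then obtain i i' where "i < k" "i' < k" "w = e i" "w' = e i'" "snd (e i) = snd (e i')" by (auto simp: M_def)
      then show "w = w'" using snd_inj by blast
    qed
  next
    fix w assume "w \<in> M"
    then obtain i where i: "i < k" "w = e i" by (auto simp: M_def)
    show "fst w \<in> L" "snd w \<notin> L" using eL[OF i(1)] i by auto
    have "A i @ [X i] \<in> tree_nodes r" using AX[OF i(1)] Str by blast
    moreover have "pn (A i) i < k" "pn (A i @ [X i]) i < k" using AX[OF i(1)] pn_lt i by auto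
    ultimately show "{fst w, snd w} \<in> snd (CT r k)"
      using tree_edge_CT i by (auto simp: e_def v1_def v2_def)
  qed
  moreover have "card M = k" using einj by (simp add: M_def card_image)
  moreover have "M \<subseteq> (S \<times> {..<k}) \<times> (S \<times> {..<k})"
  proof
    fix w assume "w \<in> M"
    then obtain i where i: "i < k" "w = e i" by (auto simp: M_def)
    have "v1 i \<in> S \<times> {..<k}" "v2 i \<in> S \<times> {..<k}" using AX[OF i(1)] pn_lt i(1) by (auto simp: v1_def v2_def)
    then show "w \<in> (S \<times> {..<k}) \<times> (S \<times> {..<k})" using i by (auto simp: e_def)
  qed
  ultimately show ?thesis by blast
qed

definition subtree :: "bool list \<Rightarrow> nat \<Rightarrow> bool list set" where
  "subtree p h = {p @ w | w. length w \<le> h}"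

lemma ivt:
  fixes f :: "nat \<Rightarrow> nat"
  assumes "f 0 = 0" "\<forall>t. f (Suc t) \<le> Suc (f t)" "k \<le> f T"
  shows "\<exists>t\<le>T. f t = k"
  using assms(3)
proof (induction T)
  case 0 then show ?case using assms(1) by simp
next
  case (Suc T)
  show ?case
  proof (cases "k \<le> f T")
    case True then show ?thesis using Suc.IH le_SucI by blast
  next
    case False
    have "f (Suc T) \<le> Suc (f T)" using assms(2) by blast
    then have "f (Suc T) = k" using Suc.prems False by linarith
    then show ?thesis by blast
  qed
qed

lemma finite_subtree: "finite (subtree p h)"
proof -
  have "subtree p h = (\<lambda>w. p @ w) ` {w. set w \<subseteq> UNIV \<and> length w \<le> h}"
    by (auto simp: subtree_def)
  moreover have "finite {w::bool list. set w \<subseteq> UNIV \<and> length w \<le> h}"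
    by (rule finite_lists_length_le) simp
  ultimately show ?thesis by (metis finite_imageI)
qed

lemma subtree_tree_nodes: "length p + h \<le> r \<Longrightarrow> subtree p h \<subseteq> tree_nodes r"
  by (auto simp: subtree_def tree_nodes_def)

lemma subtree_mono: "length u + h' \<le> h \<Longrightarrow> subtree (p @ u) h' \<subseteq> subtree p h"
proof
  fix a assume "length u + h' \<le> h" "a \<in> subtree (p @ u) h'"
  then obtain w where "a = p @ u @ w" "length w \<le> h'" "length u + h' \<le> h" by (auto simp: subtree_def)
  then show "a \<in> subtree p h" unfolding subtree_def by (intro CollectI exI[of _ "u @ w"]) simp
qed

lemma subtree_mem: "length u \<le> h \<Longrightarrow> p @ u \<in> subtree p h"
  unfolding subtree_def by blast

lemma subtree_root: "p \<in> subtree p h"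
  unfolding subtree_def by (intro CollectI exI[of _ "[]"]) simp

lemma subtree_par: "\<forall>a\<in>subtree p h. a \<noteq> p \<longrightarrow> (\<exists>a' x. a = a' @ [x] \<and> a' \<in> subtree p h)"
proof (intro ballI impI)
  fix a assume "a \<in> subtree p h" "a \<noteq> p"
  then obtain w where w: "a = p @ w" "length w \<le> h" "w \<noteq> []" by (auto simp: subtree_def)
  then obtain w' x where wx: "w = w' @ [x]" by (cases w rule: rev_cases) auto
  have "p @ w' \<in> subtree p h" using w wx subtree_mem[of w' h p] by simp
  moreover have "a = (p @ w') @ [x]" using w wx by simp
  ultimately show "\<exists>a' x. a = a' @ [x] \<and> a' \<in> subtree p h" by blast
qed

lemma subtree_card3: "h \<ge> 1 \<Longrightarrow> 3 \<le> card (subtree p h)"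
proof -
  assume h: "h \<ge> 1"
  have "{p, p @ [True], p @ [False]} \<subseteq> subtree p h"
    using h subtree_mem[of "[True]" h p] subtree_mem[of "[False]" h p] subtree_root[of p h] by simp
  then have "card {p, p @ [True], p @ [False]} \<le> card (subtree p h)"
    by (rule card_mono[OF finite_subtree])
  moreover have "p \<noteq> p @ [True]" "p \<noteq> p @ [False]" "p @ [True] \<noteq> p @ [False]" by auto
  then have "card {p, p @ [True], p @ [False]} = 3" by simp
  ultimately show ?thesis by simp
qed

lemma matching_union:
  assumes "matching r k L M1" "matching r k L M2" "M1 \<subseteq> X \<times> X" "M2 \<subseteq> Y \<times> Y" "X \<inter> Y = {}"
  shows "matching r k L (M1 \<union> M2) \<and> card (M1 \<union> M2) = card M1 + card M2"
proof -
  have fst1: "fst ` M1 \<subseteq> X" "snd ` M1 \<subseteq> X" using assms(3) by auto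
  have fst2: "fst ` M2 \<subseteq> Y" "snd ` M2 \<subseteq> Y" using assms(4) by auto
  have d: "M1 \<inter> M2 = {}" using assms(3-5) by auto
  have i1: "inj_on fst M1" "inj_on snd M1" "inj_on fst M2" "inj_on snd M2"
    using assms(1,2) by (auto simp: matching_def)
  have "fst ` (M1 - M2) \<inter> fst ` (M2 - M1) = {}" using fst1 fst2 assms(5) by blast
  then have "inj_on fst (M1 \<union> M2)" using i1 inj_on_Un by blast
  have "snd ` (M1 - M2) \<inter> snd ` (M2 - M1) = {}" using fst1 fst2 assms(5) by blast
  then have "inj_on snd (M1 \<union> M2)" using i1 inj_on_Un by blast
  note this \<open>inj_on fst (M1 \<union> M2)\<close>
  then have "matching r k L (M1 \<union> M2)" using assms(1,2) unfolding matching_def by blast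
  moreover have "card (M1 \<union> M2) = card M1 + card M2"
    using assms(1,2) d by (simp add: matching_def card_Un_disjoint)
  ultimately show ?thesis by blast
qed

lemma tree_main:
  fixes Lc :: "nat \<Rightarrow> (bool list \<times> nat) set"
  assumes k1: "k \<ge> 1"
    and mono: "\<And>t t'. t \<le> t' \<Longrightarrow> Lc t \<subseteq> Lc t'"
    and step: "\<And>t. \<exists>w. Lc (Suc t) \<subseteq> insert w (Lc t)"
    and zero: "Lc 0 = {}"
    and full: "tree_nodes r \<times> {..<k} \<subseteq> Lc T"
  shows "h \<ge> 1 \<Longrightarrow> length p + h \<le> r \<Longrightarrow> \<exists>t. k \<le> card (Lc t \<inter> (subtree p h \<times> {..<k})) \<and>
     k \<le> card ((subtree p h \<times> {..<k}) - Lc t) \<and>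
     (\<exists>M. matching r k (Lc t) M \<and> card M = k * ((h + 1) div 2) \<and>
        M \<subseteq> (subtree p h \<times> {..<k}) \<times> (subtree p h \<times> {..<k}))"
proof (induction h arbitrary: p rule: less_induct)
  case (less h)
  let ?CV = "\<lambda>p h. subtree p h \<times> {..<k}"
  have finCV: "finite (?CV p h)" for p h by (simp add: finite_subtree)
  show ?case
  proof (cases "h \<le> 2")
    case True
    define f where "f t = card (Lc t \<inter> ?CV p h)" for t
    have f0: "f 0 = 0" by (simp add: f_def zero)
    have fS: "\<forall>t. f (Suc t) \<le> Suc (f t)"
    proof
      fix t
      obtain w where w: "Lc (Suc t) \<subseteq> insert w (Lc t)" using step by blast
      have "Lc (Suc t) \<inter> ?CV p h \<subseteq> insert w (Lc t \<inter> ?CV p h)" using w by blast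
      then have "f (Suc t) \<le> card (insert w (Lc t \<inter> ?CV p h))"
        unfolding f_def by (rule card_mono[rotated]) (simp add: finCV)
      also have "\<dots> \<le> Suc (f t)" unfolding f_def by (simp add: card_insert_le_m1 card_insert_if finCV)
      finally show "f (Suc t) \<le> Suc (f t)" .
    qed
    have sub: "?CV p h \<subseteq> tree_nodes r \<times> {..<k}" using subtree_tree_nodes[OF less.prems(2)] by auto
    have cardCV: "card (?CV p h) = card (subtree p h) * k" by (simp add: card_cartesian_product)
    have c3: "3 * k \<le> card (?CV p h)" using subtree_card3[OF less.prems(1)] cardCV by simp
    have "Lc T \<inter> ?CV p h = ?CV p h" using sub full by blast
    then have "f T = card (?CV p h)" unfolding f_def by simp
    then have "k \<le> f T" using c3 by linarith
    then obtain t where t: "f t = k" using ivt[OF f0 fS] by blast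
    have "?CV p h - Lc t = ?CV p h - (Lc t \<inter> ?CV p h)" by blast
    then have "card (?CV p h - Lc t) = card (?CV p h) - k"
      using t finCV by (simp add: f_def card_Diff_subset)
    then have cO: "k \<le> card (?CV p h - Lc t)" using c3 by linarith
    have cL: "k \<le> card (Lc t \<inter> ?CV p h)" using t by (simp add: f_def)
    obtain M where M: "matching r k (Lc t) M" "card M = k" "M \<subseteq> ?CV p h \<times> ?CV p h"
      using region[OF k1 subtree_tree_nodes[OF less.prems(2)] finite_subtree subtree_root subtree_par cL cO]
      by blast
    have "(h + 1) div 2 = 1" using True less.prems(1) by (cases h; cases "h - 1") auto
    then show ?thesis using M cL cO by auto
  next
    case False
    define h' where "h' = h - 2"
    have h': "h' \<ge> 1" "h' < h" "h = h' + 2" using False by (auto simp: h'_def)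
    have IH: "\<exists>t. k \<le> card (Lc t \<inter> ?CV (p @ [x, y]) h') \<and> k \<le> card (?CV (p @ [x, y]) h' - Lc t) \<and>
       (\<exists>M. matching r k (Lc t) M \<and> card M = k * ((h' + 1) div 2) \<and> M \<subseteq> ?CV (p @ [x, y]) h' \<times> ?CV (p @ [x, y]) h')"
      for x y using less.IH[OF h'(2) h'(1)] less.prems(2) h'(3) by simp
    have core: "\<exists>t. k \<le> card (Lc t \<inter> ?CV p h) \<and> k \<le> card (?CV p h - Lc t) \<and>
       (\<exists>M. matching r k (Lc t) M \<and> card M = k * ((h + 1) div 2) \<and> M \<subseteq> ?CV p h \<times> ?CV p h)"
      if ne: "(xa, ya) \<noteq> (xb, yb)" "(xc, yc) \<noteq> (xb, yb)" and tt: "ta \<le> tb" "tb \<le> tc"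
        and Pa: "k \<le> card (Lc ta \<inter> ?CV (p @ [xa, ya]) h')"
        and Pc: "k \<le> card (?CV (p @ [xc, yc]) h' - Lc tc)"
        and Pb: "matching r k (Lc tb) M1" "card M1 = k * ((h' + 1) div 2)"
           "M1 \<subseteq> ?CV (p @ [xb, yb]) h' \<times> ?CV (p @ [xb, yb]) h'"
      for xa ya xb yb xc yc ta tb tc M1
    proof -
      define S where "S = {p, p @ [xa], p @ [xc]} \<union> subtree (p @ [xa, ya]) h' \<union> subtree (p @ [xc, yc]) h'"
      have Ssub: "S \<subseteq> subtree p h"
        unfolding S_def using h'(3) subtree_mono[of "[xa, ya]" h' h p] subtree_mono[of "[xc, yc]" h' h p]
          subtree_mem[of "[]" h p] subtree_mem[of "[xa]" h p] subtree_mem[of "[xc]" h p] by auto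
      have Str: "S \<subseteq> tree_nodes r" using Ssub subtree_tree_nodes[OF less.prems(2)] by blast
      have finS: "finite S" by (simp add: S_def finite_subtree)
      have qS: "p \<in> S" by (simp add: S_def)
      have parS: "\<forall>a\<in>S. a \<noteq> p \<longrightarrow> (\<exists>a' x. a = a' @ [x] \<and> a' \<in> S)"
      proof (intro ballI impI)
        fix a assume a: "a \<in> S" "a \<noteq> p"
        show "\<exists>a' x. a = a' @ [x] \<and> a' \<in> S"
        proof (cases "a \<in> {p @ [xa], p @ [xc]}")
          case True then show ?thesis by (auto simp: S_def)
        next
          case False
          then have "a \<in> subtree (p @ [xa, ya]) h' \<or> a \<in> subtree (p @ [xc, yc]) h'" using a by (auto simp: S_def)
          then show ?thesis
          proof
            assume as: "a \<in> subtree (p @ [xa, ya]) h'"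
            show ?thesis
            proof (cases "a = p @ [xa, ya]")
              case True then show ?thesis by (auto simp: S_def intro!: exI[of _ "p @ [xa]"])
            next
              case False then show ?thesis using subtree_par[of "p @ [xa, ya]" h'] as unfolding S_def by blast
            qed
          next
            assume as: "a \<in> subtree (p @ [xc, yc]) h'"
            show ?thesis
            proof (cases "a = p @ [xc, yc]")
              case True then show ?thesis by (auto simp: S_def intro!: exI[of _ "p @ [xc]"])
            next
              case False then show ?thesis using subtree_par[of "p @ [xc, yc]" h'] as unfolding S_def by blast
            qed
          qed
        qed
      qed
      have finSk: "finite (S \<times> {..<k})" using finS by simp
      have "card (Lc ta \<inter> ?CV (p @ [xa, ya]) h') \<le> card (Lc tb \<inter> ?CV (p @ [xa, ya]) h')"
        by (rule card_mono) (use mono[OF tt(1)] finCV in auto)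
      then have Pa': "k \<le> card (Lc tb \<inter> ?CV (p @ [xa, ya]) h')" using Pa by linarith
      have "card (?CV (p @ [xc, yc]) h' - Lc tc) \<le> card (?CV (p @ [xc, yc]) h' - Lc tb)"
        by (rule card_mono) (use mono[OF tt(2)] finCV in auto)
      then have Pc': "k \<le> card (?CV (p @ [xc, yc]) h' - Lc tb)" using Pc by linarith
      have SA: "subtree (p @ [xa, ya]) h' \<subseteq> S" and SC: "subtree (p @ [xc, yc]) h' \<subseteq> S"
        unfolding S_def by blast+
      have "card (Lc tb \<inter> ?CV (p @ [xa, ya]) h') \<le> card (Lc tb \<inter> (S \<times> {..<k}))"
        by (rule card_mono) (use finSk SA in auto)
      then have cL: "k \<le> card (Lc tb \<inter> (S \<times> {..<k}))" using Pa' by linarith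
      have "card (?CV (p @ [xc, yc]) h' - Lc tb) \<le> card ((S \<times> {..<k}) - Lc tb)"
        by (rule card_mono) (use finSk SC in auto)
      then have cO: "k \<le> card ((S \<times> {..<k}) - Lc tb)" using Pc' by linarith
      obtain M2 where M2: "matching r k (Lc tb) M2" "card M2 = k" "M2 \<subseteq> (S \<times> {..<k}) \<times> (S \<times> {..<k})"
        using region[OF k1 Str finS qS parS cL cO] by blast
      have disjS: "S \<inter> subtree (p @ [xb, yb]) h' = {}"
      proof (rule ccontr)
        assume "S \<inter> subtree (p @ [xb, yb]) h' \<noteq> {}"
        then obtain a where a1: "a \<in> S" and a2: "a \<in> subtree (p @ [xb, yb]) h'" by blast
        from a2 obtain w where w: "a = p @ [xb, yb] @ w" by (auto simp: subtree_def)
        from a1 show False unfolding S_def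
        proof (elim UnE insertE)
          assume "a \<in> subtree (p @ [xa, ya]) h'"
          then obtain w' where "a = p @ [xa, ya] @ w'" by (auto simp: subtree_def)
          with w ne(1) show False by simp
        next
          assume "a \<in> subtree (p @ [xc, yc]) h'"
          then obtain w' where "a = p @ [xc, yc] @ w'" by (auto simp: subtree_def)
          with w ne(2) show False by simp
        qed (use w in auto)
      qed
      have disj: "(S \<times> {..<k}) \<inter> ?CV (p @ [xb, yb]) h' = {}" using disjS by blast
      have U: "matching r k (Lc tb) (M2 \<union> M1) \<and> card (M2 \<union> M1) = card M2 + card M1"
        by (rule matching_union[OF M2(1) Pb(1) M2(3) Pb(3) disj])
      have sub1: "?CV (p @ [xb, yb]) h' \<subseteq> ?CV p h"
        using subtree_mono[of "[xb, yb]" h' h p] h'(3) by auto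
      have sub2: "S \<times> {..<k} \<subseteq> ?CV p h" using Ssub by auto
      have "(h + 1) div 2 = (h' + 1) div 2 + 1" using h'(3) by simp
      then have C1: "card (M2 \<union> M1) = k * ((h + 1) div 2)" using U M2(2) Pb(2) by (simp add: algebra_simps)
      have C2: "M2 \<union> M1 \<subseteq> ?CV p h \<times> ?CV p h" using M2(3) Pb(3) sub1 sub2 by blast
      have "card (Lc tb \<inter> ?CV (p @ [xa, ya]) h') \<le> card (Lc tb \<inter> ?CV p h)"
        by (rule card_mono) (use finCV SA Ssub in auto)
      then have C3: "k \<le> card (Lc tb \<inter> ?CV p h)" using Pa' by linarith
      have "card (?CV (p @ [xc, yc]) h' - Lc tb) \<le> card (?CV p h - Lc tb)"
        by (rule card_mono) (use finCV SC Ssub in auto)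
      then have C4: "k \<le> card (?CV p h - Lc tb)" using Pc' by linarith
      show ?thesis using C1 C2 C3 C4 U by (intro exI[of _ tb] conjI exI[of _ "M2 \<union> M1"]) auto
    qed
    obtain t1 M1 where W1: "k \<le> card (Lc t1 \<inter> ?CV (p @ [False, False]) h')" "k \<le> card (?CV (p @ [False, False]) h' - Lc t1)"
      "matching r k (Lc t1) M1" "card M1 = k * ((h' + 1) div 2)" "M1 \<subseteq> ?CV (p @ [False, False]) h' \<times> ?CV (p @ [False, False]) h'"
      using IH[of False False] by blast
    obtain t2 M2 where W2: "k \<le> card (Lc t2 \<inter> ?CV (p @ [False, True]) h')" "k \<le> card (?CV (p @ [False, True]) h' - Lc t2)"
      "matching r k (Lc t2) M2" "card M2 = k * ((h' + 1) div 2)" "M2 \<subseteq> ?CV (p @ [False, True]) h' \<times> ?CV (p @ [False, True]) h'"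
      using IH[of False True] by blast
    obtain t3 M3 where W3: "k \<le> card (Lc t3 \<inter> ?CV (p @ [True, False]) h')" "k \<le> card (?CV (p @ [True, False]) h' - Lc t3)"
      "matching r k (Lc t3) M3" "card M3 = k * ((h' + 1) div 2)" "M3 \<subseteq> ?CV (p @ [True, False]) h' \<times> ?CV (p @ [True, False]) h'"
      using IH[of True False] by blast
    consider "t1 \<le> t2 \<and> t2 \<le> t3" | "t3 \<le> t2 \<and> t2 \<le> t1" | "t2 \<le> t1 \<and> t1 \<le> t3"
      | "t3 \<le> t1 \<and> t1 \<le> t2" | "t1 \<le> t3 \<and> t3 \<le> t2" | "t2 \<le> t3 \<and> t3 \<le> t1" by linarith
    then show ?thesis
    proof cases
      case 1 show ?thesis using core[of False False False True True False t1 t2 t3 M2, OF _ _ _ _ W1(1) W3(2) W2(3) W2(4) W2(5)] 1 by simp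
    next
      case 2 show ?thesis using core[of True False False True False False t3 t2 t1 M2, OF _ _ _ _ W3(1) W1(2) W2(3) W2(4) W2(5)] 2 by simp
    next
      case 3 show ?thesis using core[of False True False False True False t2 t1 t3 M1, OF _ _ _ _ W2(1) W3(2) W1(3) W1(4) W1(5)] 3 by simp
    next
      case 4 show ?thesis using core[of True False False False False True t3 t1 t2 M1, OF _ _ _ _ W3(1) W2(2) W1(3) W1(4) W1(5)] 4 by simp
    next
      case 5 show ?thesis using core[of False False True False False True t1 t3 t2 M3, OF _ _ _ _ W1(1) W2(2) W3(3) W3(4) W3(5)] 5 by simp
    next
      case 6 show ?thesis using core[of False True True False False False t2 t3 t1 M3, OF _ _ _ _ W2(1) W1(2) W3(3) W3(4) W3(5)] 6 by simp
    qed
  qed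
qed

definition sigZ :: "(bool list \<times> nat) set \<Rightarrow> (bool list \<times> nat) cnf_var \<Rightarrow> bool" where
  "sigZ Z x = (case x of Inl v \<Rightarrow> v \<notin> Z | Inr e \<Rightarrow> e \<subseteq> Z)"

lemma sigZ_sat: "cnf_sat (F r k) (sigZ Z)"
  unfolding cnf_sat_def F_def graph_cnf_def
proof
  fix C assume "C \<in> {{(Inl u, True), (Inr {u, v}, True), (Inl v, True)} |u v. {u, v} \<in> snd (CT r k)}"
  then obtain u v where C: "C = {(Inl u, True), (Inr {u, v}, True), (Inl v, True)}" by blast
  show "\<exists>l\<in>C. sigZ Z (fst l) = snd l"
  proof (cases "u \<in> Z \<and> v \<in> Z")
    case True then show ?thesis using C by (auto simp: sigZ_def)
  next
    case False then show ?thesis using C by (auto simp: sigZ_def)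
  qed
qed

lemma clause_in: "{u, v} \<in> snd (CT r k) \<Longrightarrow> {(Inl u, True), (Inr {u, v}, True), (Inl v, True)} \<in> F r k"
  unfolding F_def graph_cnf_def by blast

lemma fool_pair:
  assumes M: "matching r k {v. Inl v \<in> Ls} M" and S: "S \<subseteq> M" "S' \<subseteq> M" and e: "e \<in> S" "e \<notin> S'"
  shows "\<not> cnf_sat (F r k) (\<lambda>x. if x \<in> Ls then sigZ (fst ` S \<union> snd ` (M - S)) x
                                   else sigZ (fst ` S' \<union> snd ` (M - S')) x)"
proof
  let ?Z = "fst ` S \<union> snd ` (M - S)" and ?Z' = "fst ` S' \<union> snd ` (M - S')"
  define sx where "sx = (\<lambda>x. if x \<in> Ls then sigZ ?Z x else sigZ ?Z' x)"
  assume sat0: "cnf_sat (F r k) (\<lambda>x. if x \<in> Ls then sigZ ?Z x else sigZ ?Z' x)"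
  then have sat: "cnf_sat (F r k) sx" by (simp add: sx_def)
  obtain x y where xy: "e = (x, y)" by (cases e)
  have eM: "e \<in> M" using S e by blast
  have mp: "finite M" "inj_on fst M" "inj_on snd M"
    "\<forall>e\<in>M. fst e \<in> {v. Inl v \<in> Ls} \<and> snd e \<notin> {v. Inl v \<in> Ls} \<and> {fst e, snd e} \<in> snd (CT r k)"
    using M by (auto simp: matching_def)
  have xL: "Inl x \<in> Ls" and yL: "Inl y \<notin> Ls" and E: "{x, y} \<in> snd (CT r k)" using mp(4) eM xy by auto
  have x1: "x \<in> ?Z" using e xy by force
  have y1: "y \<in> ?Z'" using e eM xy by force
  have y2: "y \<notin> ?Z"
  proof
    assume "y \<in> ?Z"
    then consider "y \<in> fst ` S" | "y \<in> snd ` (M - S)" by blast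
    then show False
    proof cases
      case 1 then obtain p where "p \<in> S" "fst p = y" by blast
      then show False using mp(4) S yL by auto
    next
      case 2 then obtain p where p: "p \<in> M - S" "snd p = y" by blast
      then have "p = e" using inj_onD[OF mp(3), of p e] eM xy by auto
      then show False using p e by blast
    qed
  qed
  have x2: "x \<notin> ?Z'"
  proof
    assume "x \<in> ?Z'"
    then consider "x \<in> fst ` S'" | "x \<in> snd ` (M - S')" by blast
    then show False
    proof cases
      case 1 then obtain p where p: "p \<in> S'" "fst p = x" by blast
      then have "p = e" using inj_onD[OF mp(2), of p e] eM xy S by auto
      then show False using p e by blast
    next
      case 2 then obtain p where "p \<in> M - S'" "snd p = x" by blast
      then show False using mp(4) xL by auto
    qed
  qed
  have "{(Inl x, True), (Inr {x, y}, True), (Inl y, True)} \<in> F r k" by (rule clause_in[OF E])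
  with sat obtain l where l: "l \<in> {(Inl x, True), (Inr {x, y}, True), (Inl y, True)}" "sx (fst l) = snd l"
    unfolding cnf_sat_def by blast
  have "\<not> {x, y} \<subseteq> ?Z" "\<not> {x, y} \<subseteq> ?Z'" using y2 x2 by auto
  note nz = this
  have v1: "sx (Inl x) = False" using xL x1 by (simp add: sx_def sigZ_def)
  have v2: "sx (Inr {x, y}) = False" using nz by (simp add: sx_def sigZ_def)
  have v3: "sx (Inl y) = False" using yL y1 by (simp add: sx_def sigZ_def)
  from l(1) have "l = (Inl x, True) \<or> l = (Inr {x, y}, True) \<or> l = (Inl y, True)" by blast
  then show False using l(2) v1 v2 v3 by (elim disjE) simp_all
qed

lemma is_path_edges: "is_path B u P w \<Longrightarrow> e \<in> set P \<Longrightarrow> e \<in> bp_edges B"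
  by (induction P arbitrary: u) auto

lemma labels_vars:
  assumes "is_path B u P w" "l \<in> set (path_labels P)"
  shows "fst l \<in> bp_vars B"
proof -
  obtain e where e: "e \<in> set P" "fst (snd e) = Some l" using assms(2) by (auto simp: set_path_labels)
  then have "e \<in> bp_edges B" using is_path_edges[OF assms(1)] by blast
  moreover obtain a lo b where "e = (a, lo, b)" by (cases e) auto
  ultimately have "(a, Some l, b) \<in> bp_edges B" using e by simp
  then show ?thesis unfolding bp_vars_def by blast
qed

lemma vertex_in_vars:
  assumes comp: "computes B (F r k)" and r: "r \<ge> 1" and v: "v \<in> tree_nodes r \<times> {..<k}"
  shows "Inl v \<in> bp_vars B"
proof (rule ccontr)
  assume nv: "Inl v \<notin> bp_vars B"
  obtain a i where ai: "v = (a, i)" "a \<in> tree_nodes r" "i < k" using v by auto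
  have "\<exists>u. u \<noteq> v \<and> {v, u} \<in> snd (CT r k)"
  proof (cases a rule: rev_cases)
    case Nil
    have "[] @ [True] \<in> tree_nodes r" using r by (simp add: tree_nodes_def)
    from tree_edge_CT(1)[OF this ai(3) ai(3)] show ?thesis using Nil ai by (intro exI[of _ "([True], i)"]) auto
  next
    case (snoc a' x)
    have "a' @ [x] \<in> tree_nodes r" using snoc ai by simp
    from tree_edge_CT(2)[OF this ai(3) ai(3)] show ?thesis using snoc ai by (intro exI[of _ "(a', i)"]) auto
  qed
  then obtain u where u: "u \<noteq> v" "{v, u} \<in> snd (CT r k)" by blast
  define s1 where "s1 z = (case z of Inl w \<Rightarrow> w = v | Inr e \<Rightarrow> v \<notin> e)" for z :: "(bool list \<times> nat) cnf_var"
  have "cnf_sat (F r k) s1"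
    unfolding cnf_sat_def F_def graph_cnf_def
  proof
    fix C assume "C \<in> {{(Inl u, True), (Inr {u, v}, True), (Inl v, True)} |u v. {u, v} \<in> snd (CT r k)}"
    then obtain a b where C: "C = {(Inl a, True), (Inr {a, b}, True), (Inl b, True)}" by blast
    show "\<exists>l\<in>C. s1 (fst l) = snd l" using C by (cases "a = v"; cases "b = v") (auto simp: s1_def)
  qed
  with comp obtain P where P: "comp_path B P" "\<forall>l\<in>set (path_labels P). s1 (fst l) = snd l"
    unfolding computes_def by blast
  define s2 where "s2 = s1(Inl v := False)"
  have "\<forall>l\<in>set (path_labels P). s2 (fst l) = snd l"
  proof
    fix l assume l: "l \<in> set (path_labels P)"
    have "is_path B (bp_root B) P (bp_leaf B)" using P(1) by (simp add: comp_path_def)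
    from labels_vars[OF this l] have "fst l \<in> bp_vars B" .
    then have "fst l \<noteq> Inl v" using nv by auto
    then show "s2 (fst l) = snd l" using P(2) l by (simp add: s2_def)
  qed
  then have "cnf_sat (F r k) s2" using P(1) comp unfolding computes_def by blast
  moreover have "{(Inl v, True), (Inr {v, u}, True), (Inl u, True)} \<in> F r k" by (rule clause_in[OF u(2)])
  ultimately show False using u(1) unfolding cnf_sat_def by (auto simp: s2_def s1_def)
qed

lemma take_Suc_sub: "set (take (Suc t) xs) \<subseteq> insert (xs ! t) (set (take t xs))"
proof (cases "t < length xs")
  case True then show ?thesis by (simp add: take_Suc_conv_app_nth)
next
  case False then show ?thesis by auto
qed

lemma key_bound:
  fixes B :: "('n, (bool list \<times> nat) cnf_var) bp"
  assumes c1: "c \<ge> 1" and k1: "k \<ge> 1" and ns: "c_NSOBDD c B" and comp: "computes B (F r k)"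
  shows "2 ^ (k * ((r + 1) div 2)) \<le> card (bp_nodes B) ^ (2 * c - 1)"
proof -
  from ns have wf: "bp_wf B" by (simp add: c_NSOBDD_def)
  from ns obtain SV where dist: "distinct SV" and setSV: "set SV = bp_vars B"
    and split: "\<forall>P. comp_path B P \<longrightarrow> (\<exists>Ps. length Ps = c \<and> concat Ps = P \<and>
        (\<forall>Q\<in>set Ps. sorted_wrt (sv_less SV) (map fst (path_labels Q))))"
    unfolding c_NSOBDD_def by blast
  have fin: "finite (bp_nodes B)" and rt: "bp_root B \<in> bp_nodes B" using wf by (auto simp: bp_wf_def)
  then have s1: "card (bp_nodes B) \<ge> 1" by (metis One_nat_def Suc_leI card_gt_0_iff empty_iff)
  show ?thesis
  proof (cases "r = 0")
    case True
    then show ?thesis using s1 by simp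
  next
    case False
    then have r1: "r \<ge> 1" by simp
    define Lc where "Lc t = {v. Inl v \<in> set (take t SV)}" for t
    have mono: "Lc t \<subseteq> Lc t'" if "t \<le> t'" for t t'
      using set_take_subset_set_take[OF that, of SV] by (auto simp: Lc_def)
    have step: "\<exists>w. Lc (Suc t) \<subseteq> insert w (Lc t)" for t
    proof (cases "SV ! t")
      case (Inl w)
      show ?thesis using take_Suc_sub[of t SV] Inl by (intro exI[of _ w]) (auto simp: Lc_def)
    next
      case (Inr w)
      show ?thesis using take_Suc_sub[of t SV] Inr by (intro exI[of _ undefined]) (auto simp: Lc_def)
    qed
    have zero: "Lc 0 = {}" by (simp add: Lc_def)
    have full: "tree_nodes r \<times> {..<k} \<subseteq> Lc (length SV)"
      using vertex_in_vars[OF comp r1] setSV by (auto simp: Lc_def)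
    obtain t M where M: "matching r k (Lc t) M" "card M = k * ((r + 1) div 2)"
      using tree_main[OF k1 mono step zero full, of r "[]"] r1 by auto
    have finM: "finite M" using M(1) by (simp add: matching_def)
    define \<sigma> where "\<sigma> S = sigZ (fst ` S \<union> snd ` (M - S))" for S
    have Lc_eq: "Lc t = {v. Inl v \<in> set (take t SV)}" by (simp add: Lc_def)
    have "card (Pow M) \<le> card (bp_nodes B) ^ (2 * c - 1)"
    proof (rule fooling[OF wf dist split comp c1, of "Pow M" \<sigma> t])
      show "\<forall>s\<in>Pow M. cnf_sat (F r k) (\<sigma> s)" by (simp add: \<sigma>_def sigZ_sat)
      show "\<forall>s\<in>Pow M. \<forall>s'\<in>Pow M. s \<noteq> s' \<longrightarrow>
        \<not> cnf_sat (F r k) (\<lambda>x. if x \<in> set (take t SV) then \<sigma> s x else \<sigma> s' x) \<or>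
        \<not> cnf_sat (F r k) (\<lambda>x. if x \<in> set (take t SV) then \<sigma> s' x else \<sigma> s x)"
      proof (intro ballI impI)
        fix s s' assume ss: "s \<in> Pow M" "s' \<in> Pow M" "s \<noteq> s'"
        have Mm: "matching r k {v. Inl v \<in> set (take t SV)} M" using M(1) Lc_eq by simp
        show "\<not> cnf_sat (F r k) (\<lambda>x. if x \<in> set (take t SV) then \<sigma> s x else \<sigma> s' x) \<or>
          \<not> cnf_sat (F r k) (\<lambda>x. if x \<in> set (take t SV) then \<sigma> s' x else \<sigma> s x)"
        proof (cases "\<exists>e. e \<in> s \<and> e \<notin> s'")
          case True
          then obtain e where "e \<in> s" "e \<notin> s'" by blast
          from fool_pair[OF Mm _ _ this] ss have "\<not> cnf_sat (F r k) (\<lambda>x. if x \<in> set (take t SV) then \<sigma> s x else \<sigma> s' x)"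
            unfolding \<sigma>_def by blast
          then show ?thesis by blast
        next
          case False
          then obtain e where "e \<in> s'" "e \<notin> s" using ss by blast
          from fool_pair[OF Mm _ _ this] ss have "\<not> cnf_sat (F r k) (\<lambda>x. if x \<in> set (take t SV) then \<sigma> s' x else \<sigma> s x)"
            unfolding \<sigma>_def by blast
          then show ?thesis by blast
        qed
      qed
    qed
    then show ?thesis using card_Pow[OF finM] M(2) by simp
  qed
qed

lemma card_len_eq: "card {w::bool list. length w = m} = 2 ^ m"
  using card_lists_length_eq[of "UNIV :: bool set" m] by simp

lemma finite_len_le: "finite {w::bool list. length w \<le> m}"
  using finite_lists_length_le[of "UNIV :: bool set" m] by simp

lemma card_len_le: "card {w::bool list. length w \<le> n} = 2 ^ Suc n - 1"
proof (induction n)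
  case 0
  have "{w::bool list. length w \<le> 0} = {[]}" by auto
  then show ?case by simp
next
  case (Suc n)
  have eq: "{w::bool list. length w \<le> Suc n} = {w. length w \<le> n} \<union> {w. length w = Suc n}" by auto
  have fin2: "finite {w::bool list. length w = Suc n}"
    using finite_lists_length_eq[of "UNIV :: bool set" "Suc n"] by simp
  have "card {w::bool list. length w \<le> Suc n} = card {w::bool list. length w \<le> n} + card {w::bool list. length w = Suc n}"
    unfolding eq by (rule card_Un_disjoint) (use finite_len_le fin2 in auto)
  also have "\<dots> = 2 ^ Suc n - 1 + 2 ^ Suc n" using Suc card_len_eq by simp
  also have "\<dots> = 2 ^ Suc (Suc n) - 1"
  proof -
    have "(1::nat) \<le> 2 ^ Suc n" by simp
    then show ?thesis by simp
  qed
  finally show ?case .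
qed

lemma m_bound:
  assumes k1: "k \<ge> 1"
  shows "card (graph_cnf_vars (CT r k)) \<le> 3 * card (tree_nodes r) * k * k"
proof -
  let ?N = "card (tree_nodes r)"
  have finT: "finite (tree_nodes r)" using finite_len_le by (simp add: tree_nodes_def)
  define V where "V = tree_nodes r \<times> {..<k}"
  define E1 where "E1 = {{(a, i), (a, j)} | a i j. a \<in> tree_nodes r \<and> i < k \<and> j < k \<and> i \<noteq> j}"
  define E2 where "E2 = {{(a, i), (b, j)} | a b i j. {a, b} \<in> tree_edges r \<and> i < k \<and> j < k}"
  have CT: "CT r k = (V, E1 \<union> E2)" by (simp add: CT_def V_def E1_def E2_def)
  have cV: "card V = ?N * k" by (simp add: V_def card_cartesian_product)
  have finV: "finite V" using finT by (simp add: V_def)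
  define f1 where "f1 = (\<lambda>(a :: bool list, i :: nat, j :: nat). {(a, i), (a, j)})"
  have E1sub: "E1 \<subseteq> f1 ` (tree_nodes r \<times> {..<k} \<times> {..<k})"
    by (auto simp: E1_def f1_def image_def)
  have fin1: "finite (tree_nodes r \<times> {..<k} \<times> {..<k})" using finT by simp
  have cE1: "card E1 \<le> ?N * k * k"
  proof -
    have "card E1 \<le> card (f1 ` (tree_nodes r \<times> {..<k} \<times> {..<k}))"
      by (rule card_mono[OF finite_imageI[OF fin1] E1sub])
    also have "\<dots> \<le> card (tree_nodes r \<times> {..<k} \<times> {..<k})" by (rule card_image_le[OF fin1])
    also have "\<dots> = ?N * k * k" by (simp add: card_cartesian_product)
    finally show ?thesis .
  qed
  define W where "W = {w::bool list. length w < r} \<times> (UNIV :: bool set)"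
  have finW: "finite W" unfolding W_def using finite_len_le[of r]
    by (metis (mono_tags, lifting) finite_SigmaI finite_UNIV finite_subset less_imp_le_nat mem_Collect_eq subsetI)
  have cW: "card W \<le> ?N"
  proof -
    have "inj_on (\<lambda>(w, c). w @ [c]) W" by (auto simp: inj_on_def W_def)
    moreover have "(\<lambda>(w, c). w @ [c]) ` W \<subseteq> tree_nodes r" by (auto simp: W_def tree_nodes_def)
    ultimately show ?thesis using card_inj_on_le finT by blast
  qed
  define f2 where "f2 = (\<lambda>((w :: bool list, c :: bool), i :: nat, j :: nat). {(w, i), (w @ [c], j)})"
  have E2sub: "E2 \<subseteq> f2 ` (W \<times> {..<k} \<times> {..<k})"
  proof
    fix x assume "x \<in> E2"
    then obtain a b i j where x: "x = {(a, i), (b, j)}" "{a, b} \<in> tree_edges r" "i < k" "j < k"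
      by (auto simp: E2_def)
    then obtain w c where wc: "{a, b} = {w, w @ [c]}" "length w < r" by (auto simp: tree_edges_def)
    then have "(a = w \<and> b = w @ [c]) \<or> (a = w @ [c] \<and> b = w)" by (auto simp: doubleton_eq_iff)
    then show "x \<in> f2 ` (W \<times> {..<k} \<times> {..<k})"
    proof
      assume "a = w \<and> b = w @ [c]"
      then have "x = f2 ((w, c), i, j)" using x by (simp add: f2_def)
      moreover have "((w, c), i, j) \<in> W \<times> {..<k} \<times> {..<k}" using wc x by (simp add: W_def)
      ultimately show ?thesis by blast
    next
      assume "a = w @ [c] \<and> b = w"
      then have "x = f2 ((w, c), j, i)" using x by (auto simp: f2_def)
      moreover have "((w, c), j, i) \<in> W \<times> {..<k} \<times> {..<k}" using wc x by (simp add: W_def)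
      ultimately show ?thesis by blast
    qed
  qed
  have fin2: "finite (W \<times> {..<k} \<times> {..<k})" using finW by simp
  have cE2: "card E2 \<le> ?N * k * k"
  proof -
    have "card E2 \<le> card (f2 ` (W \<times> {..<k} \<times> {..<k}))"
      by (rule card_mono[OF finite_imageI[OF fin2] E2sub])
    also have "\<dots> \<le> card (W \<times> {..<k} \<times> {..<k})" by (rule card_image_le[OF fin2])
    also have "\<dots> = card W * k * k" by (simp add: card_cartesian_product)
    also have "\<dots> \<le> ?N * k * k" using cW by simp
    finally show ?thesis .
  qed
  have eqv: "graph_cnf_vars (CT r k) = Inl ` V \<union> Inr ` (E1 \<union> E2)" by (simp add: graph_cnf_vars_def CT)
  have "card (graph_cnf_vars (CT r k)) \<le> card (Inl ` V :: (bool list \<times> nat) cnf_var set) + card (Inr ` (E1 \<union> E2) :: (bool list \<times> nat) cnf_var set)"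
    unfolding eqv by (rule card_Un_le)
  also have "\<dots> \<le> card V + card (E1 \<union> E2)" by (simp add: card_image)
  also have "\<dots> \<le> card V + card E1 + card E2" using card_Un_le[of E1 E2] by simp
  also have "\<dots> \<le> ?N * k + ?N * k * k + ?N * k * k" using cV cE1 cE2 by simp
  also have "\<dots> \<le> 3 * ?N * k * k"
  proof -
    have "?N * k \<le> ?N * k * k" using k1 by simp
    then show ?thesis by simp
  qed
  finally show ?thesis .
qed

theorem lemma2:
  fixes c r k :: nat and B :: "('n, (bool list \<times> nat) cnf_var) bp"
  assumes "c \<ge> 1" and "k \<ge> 1"
    and "c_NSOBDD c B" and "computes B (F r k)"
  shows "real (bp_size B) \<ge>
    (real (card (graph_cnf_vars (CT r k))) / (6 * real k ^ 2)) powr (real k / (4 * real c - 2))"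
proof -
  note c1 = assms(1) and k1 = assms(2)
  have wf: "bp_wf B" using assms(3) by (simp add: c_NSOBDD_def)
  have fin: "finite (bp_nodes B)" and rt: "bp_root B \<in> bp_nodes B" using wf by (auto simp: bp_wf_def)
  then have s1: "card (bp_nodes B) \<ge> 1" by (metis One_nat_def Suc_leI card_gt_0_iff empty_iff)
  define n where "n = 2 * c - 1"
  define g where "g = k * ((r + 1) div 2)"
  define N where "N = card (tree_nodes r)"
  define m where "m = card (graph_cnf_vars (CT r k))"
  define s where "s = real (bp_size B)"
  have n1: "n \<ge> 1" using c1 by (simp add: n_def)
  have kb: "2 ^ g \<le> card (bp_nodes B) ^ n"
    using key_bound[OF assms] by (simp add: g_def n_def)
  then have kbr: "(2::real) ^ g \<le> s ^ n"
    unfolding s_def bp_size_def by (metis of_nat_le_iff of_nat_numeral of_nat_power)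
  have spos: "s > 0" using s1 by (simp add: s_def bp_size_def)
  have NN: "N = 2 ^ Suc r - 1" using card_len_le[of r] by (simp add: N_def tree_nodes_def)
  have mb: "m \<le> 3 * N * k * k" using m_bound[OF k1] by (simp add: m_def N_def)
  define \<rho> where "\<rho> = real m / (6 * real k ^ 2)"
  have kpos: "real k > 0" using k1 by simp
  have rho0: "\<rho> \<ge> 0" by (simp add: \<rho>_def)
  have "real m \<le> 3 * real N * real k * real k" using mb by (metis of_nat_le_iff of_nat_mult of_nat_numeral)
  then have "\<rho> \<le> 3 * real N * real k * real k / (6 * real k ^ 2)"
    unfolding \<rho>_def by (intro divide_right_mono) auto
  also have "\<dots> = real N / 2" using kpos by (simp add: power2_eq_square field_simps)
  also have "\<dots> \<le> 2 ^ r"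
  proof -
    have "N \<le> 2 ^ Suc r" using NN by simp
    then have "real N \<le> 2 ^ Suc r" by (metis of_nat_le_iff of_nat_numeral of_nat_power)
    then show ?thesis by simp
  qed
  finally have rho_le: "\<rho> \<le> 2 ^ r" .
  have cn: "4 * real c - 2 = 2 * real n" using c1 by (simp add: n_def of_nat_diff)
  define e where "e = real k / (4 * real c - 2)"
  have npos: "real n > 0" using n1 by simp
  have e_eq: "e = real k / (2 * real n)" by (simp add: e_def cn)
  have e0: "e \<ge> 0" using e_eq npos by simp
  have "\<rho> powr e \<le> (2 ^ r) powr e" by (rule powr_mono2[OF e0 rho0 rho_le])
  also have "(2 ^ r :: real) powr e = 2 powr (real r * e)"
    by (simp add: powr_realpow[symmetric] powr_powr)
  also have "\<dots> \<le> 2 powr (real g / real n)"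
  proof (rule powr_mono)
    have "r \<le> 2 * ((r + 1) div 2)" by simp
    then have "real r \<le> 2 * real ((r + 1) div 2)" by (metis of_nat_le_iff of_nat_mult of_nat_numeral)
    then have "real r * real k \<le> 2 * real g" unfolding g_def using kpos
      by (simp add: mult.commute mult.left_commute)
    then show "real r * e \<le> real g / real n" using npos unfolding e_eq
      by (simp add: field_simps)
  qed simp
  also have "2 powr (real g / real n) = (2 ^ g) powr (1 / real n)"
    by (simp add: powr_realpow[symmetric] powr_powr)
  also have "\<dots> \<le> (s ^ n) powr (1 / real n)"
    by (rule powr_mono2) (use kbr npos in auto)
  also have "(s ^ n) powr (1 / real n) = s"
    using spos npos by (simp add: powr_realpow[symmetric] powr_powr)
  finally show ?thesis by (simp add: \<rho>_def e_def s_def m_def)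
qed

end
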